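(* Let $\theta>0$, $\lambda>0$, $\mu>0$ with $\lambda<\mu+1$. For $\alpha\ge 0$, $d\ge 0$ let $$\pi(\alpha,d)=(\theta+\mu)\alpha-\frac{\alpha^2}{2}-\frac{\alpha}{\alpha+d}\,\lambda\alpha\theta-d .$$ For $\alpha>0$ let $\Pi(\alpha;\theta)=\max_{d\ge 0}\pi(\alpha,d)$, and let $\alpha^*(\theta)$ denote the maximizer of $\Pi(\alpha;\theta)$ over $\alpha>0$, which equals $$\alpha^*(\theta)=\begin{cases}\mu+\theta(1-\lambda), & \lambda\theta\le 1,\\ \theta+\mu+1-2\sqrt{\lambda\theta}, & \lambda\theta>1.\end{cases}$$ Then $$\frac{\partial\alpha^*}{\partial\theta}=\begin{cases}1-\lambda, & \lambda\theta\le 1,\\ 1-\sqrt{\lambda/\theta}, & \lambda\theta>1.\end{cases}$$ If $\lambda>1$: (i) $\alpha^*$ is strictly decreasing in $\theta$ on $(0,\lambda)$; (ii) $\alpha^*$ is strictly increasing in $\theta$ on $(\lambda,\infty)$; (iii) the global minimum of $\alpha^*$ over $\theta>0$ equals $\mu+1-\lambda$ and is attained at $\theta=\lambda$. If $\lambda\le 1$: $\partial\alpha^*/\partial\theta\ge 0$ for all $\theta>0$.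
   Context: Model of a firm choosing AI deployment $\alpha\ge 0$ and security investment $d\ge 0$. $\theta$ is AI capability, $\lambda$ conditional breach-loss magnitude, $\mu$ complementary organizational readiness. Breach probability is $p(\alpha,d)=\alpha/(\alpha+d)$ (with convention $p(0,d)=0$), breach damage is $L(\alpha,\theta)=\lambda\alpha\theta$, and profit is productivity $(\theta+\mu)\alpha-\alpha^2/2$ minus expected loss $p\cdot L$ minus $d$. *)

theory Defs
  imports "HOL-Analysis.Analysis"
begin

text \<open>Profit pi(alpha,d) = (theta+mu) alpha - alpha^2/2 - alpha/(alpha+d) * lam*alpha*theta - d.
  For alpha = d = 0 Isabelle's division gives 0/0 = 0, matching the convention p(0,d)=0.\<close>
definition profit :: "real \<Rightarrow> real \<Rightarrow> real \<Rightarrow> real \<Rightarrow> real \<Rightarrow> real" where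
  "profit lam mu \<theta> \<alpha> d =
     (\<theta> + mu) * \<alpha> - \<alpha>^2 / 2 - (\<alpha> / (\<alpha> + d)) * (lam * \<alpha> * \<theta>) - d"

definition Pi_val :: "real \<Rightarrow> real \<Rightarrow> real \<Rightarrow> real \<Rightarrow> real" where
  "Pi_val lam mu \<theta> \<alpha> = (SUP d\<in>{0..}. profit lam mu \<theta> \<alpha> d)"

definition alpha_star :: "real \<Rightarrow> real \<Rightarrow> real \<Rightarrow> real" where
  "alpha_star lam mu \<theta> =
     (if lam * \<theta> \<le> 1 then mu + \<theta> * (1 - lam)
      else \<theta> + mu + 1 - 2 * sqrt (lam * \<theta>))"

end

theory Submission
  imports Defs
begin

definition g2 :: "real \<Rightarrow> real \<Rightarrow> real \<Rightarrow> real" where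
  "g2 lam mu t = t + mu + 1 - 2 * sqrt (lam * t)"

lemma g2_deriv:
  assumes "lam > 0" "t > 0"
  shows "(g2 lam mu has_real_derivative (1 - sqrt (lam / t))) (at t)"
proof -
  have s: "sqrt (lam * t) > 0" using assms by simp
  have "((\<lambda>t. t + mu + 1 - 2 * sqrt (lam * t)) has_real_derivative
        (1 - 2 * (inverse (sqrt (lam * t)) / 2 * (lam * 1)))) (at t)"
    using s by (auto intro!: derivative_eq_intros)
  moreover have "1 - 2 * (inverse (sqrt (lam * t)) / 2 * (lam * 1)) = 1 - sqrt (lam / t)"
  proof -
    have "lam / sqrt (lam * t) = sqrt (lam / t)"
      using assms by (simp add: real_sqrt_mult real_sqrt_divide field_simps)
    then show ?thesis by (simp add: field_simps)
  qed
  ultimately show ?thesis unfolding g2_def[abs_def] by simp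
qed

definition dstar :: "real \<Rightarrow> real \<Rightarrow> real \<Rightarrow> real" where
  "dstar lam t a = (if lam * t \<le> 1 then 0 else a * (sqrt (lam * t) - 1))"

lemma inner_max:
  assumes lam: "lam > 0" and t: "t > 0" and a: "a > 0"
  shows "dstar lam t a \<ge> 0"
    and "\<And>d'. d' \<ge> 0 \<Longrightarrow> profit lam mu t a d' \<le> profit lam mu t a (dstar lam t a)"
    and "profit lam mu t a (dstar lam t a) = alpha_star lam mu t * a - a^2/2"
proof -
  define r where "r = sqrt (lam * t)"
  have r0: "r > 0" using lam t by (simp add: r_def)
  have rr: "r * r = lam * t" using lam t by (simp add: r_def)
  show "dstar lam t a \<ge> 0"
    using a by (auto simp: dstar_def)
  show val: "profit lam mu t a (dstar lam t a) = alpha_star lam mu t * a - a^2/2"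
  proof (cases "lam * t \<le> 1")
    case True
    then show ?thesis using a by (simp add: dstar_def profit_def alpha_star_def field_simps power2_eq_square)
  next
    case False
    have r1: "r > 1" using False rr r0 by (metis less_1_mult linorder_not_le mult_le_one order_less_imp_le)
    have "a + a * (r - 1) = a * r" by (simp add: algebra_simps)
    then have "profit lam mu t a (dstar lam t a) = (t + mu) * a - a^2/2 - (a / (a*r)) * (r*r*a) - a*(r-1)"
      using False by (simp add: dstar_def profit_def r_def[symmetric] rr mult.commute mult.left_commute)
    also have "\<dots> = (t + mu + 1 - 2*r) * a - a^2/2"
      using a r0 by (simp add: field_simps power2_eq_square)
    finally show ?thesis using False by (simp add: alpha_star_def r_def)
  qed
  fix d' :: real assume d': "d' \<ge> 0"
  define s where "s = a + d'"
  have s0: "s \<ge> a" "s > 0" using a d' by (auto simp: s_def)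
  have pd': "profit lam mu t a d' = (t + mu) * a - a^2/2 - (r*r*a*a) / s - (s - a)"
    using s0 by (simp add: profit_def s_def[symmetric] rr[symmetric] field_simps)
       (simp add: s_def algebra_simps)
  show "profit lam mu t a d' \<le> profit lam mu t a (dstar lam t a)"
  proof (cases "lam * t \<le> 1")
    case True
    have r1: "r * r \<le> 1" using True rr by simp
    have "(s - a) * (s - r*r*a) \<ge> 0"
    proof (rule mult_nonneg_nonneg)
      show "s - a \<ge> 0" using s0 by simp
      have "r*r*a \<le> a" using r1 a by (simp add: mult_le_cancel_right1)
      then show "s - r*r*a \<ge> 0" using s0 by simp
    qed
    then have "r * r * a * s \<le> r * r * a * a + s * (s - a)" by (simp add: algebra_simps)
    then have "r*r*a \<le> (r*r*a*a)/s + (s - a)" using s0 by (simp add: field_simps)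
    moreover have "profit lam mu t a (dstar lam t a) = (t + mu) * a - r*r*a - a^2/2"
      using val True by (simp add: alpha_star_def rr algebra_simps)
    ultimately show ?thesis by (simp add: pd')
  next
    case False
    have "(s - r*a)^2 \<ge> 0" by simp
    then have "2 * r * a * s \<le> r * r * a * a + s * s" by (simp add: power2_eq_square algebra_simps)
    then have "2*r*a \<le> (r*r*a*a)/s + s" using s0 by (simp add: field_simps)
    moreover have "profit lam mu t a (dstar lam t a) = (t + mu + 1 - 2*r) * a - a^2/2"
      using val False
      by (simp add: alpha_star_def r_def)
    ultimately show ?thesis by (simp add: pd' algebra_simps)
  qed
qed

lemma Pi_formula:
  assumes lam: "lam > 0" and t: "t > 0" and a: "a > 0"
  shows "Pi_val lam mu t a = alpha_star lam mu t * a - a^2/2"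
proof -
  have "Pi_val lam mu t a = profit lam mu t a (dstar lam t a)"
    unfolding Pi_val_def
  proof (rule cSup_eq_maximum)
    show "profit lam mu t a (dstar lam t a) \<in> profit lam mu t a ` {0..}"
      using inner_max(1)[OF assms] by auto
  qed (use inner_max(2)[OF assms] in auto)
  then show ?thesis using inner_max[OF assms] by simp
qed


lemma alpha_sq:
  assumes "lam > 0" "t > 0" "lam * t > 1"
  shows "alpha_star lam mu t = (sqrt t - sqrt lam)^2 + mu + 1 - lam"
proof -
  have "sqrt (lam * t) = sqrt lam * sqrt t" by (simp add: real_sqrt_mult)
  moreover have "(sqrt t)^2 = t" "(sqrt lam)^2 = lam" using assms by simp_all
  ultimately show ?thesis using assms
    by (simp add: alpha_star_def power2_eq_square algebra_simps)
qed

lemma alpha_pos: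
  assumes lam: "lam > 0" and mu: "mu > 0" and lm: "lam < mu + 1" and t: "t > 0"
  shows "alpha_star lam mu t > 0"
proof (cases "lam * t \<le> 1")
  case True
  show ?thesis
  proof (cases "lam \<le> 1")
    case True2: True
    have "t * (1 - lam) \<ge> 0" using True2 t by simp
    then show ?thesis using True mu by (simp add: alpha_star_def)
  next
    case False
    have "(lam - 1) * (lam * t) \<le> (lam - 1) * 1" using True False
      by (intro mult_left_mono) auto
    then have a1: "t * (lam - 1) * lam \<le> lam - 1" by (simp add: algebra_simps)
    have "mu < mu * lam" using False mu by simp
    then have "t * (lam - 1) * lam < mu * lam" using lm a1 by linarith
    then have "t * (lam - 1) < mu" using lam by simp
    then show ?thesis using True by (simp add: alpha_star_def algebra_simps)
  qed
next
  case False
  have sq: "(sqrt t - sqrt lam)^2 \<ge> 0" by simp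
  have "lam * t > 1" using False by simp
  from alpha_sq[OF lam t this, of mu] sq lm show ?thesis by linarith
qed

lemma alpha_deriv:
  assumes lam: "lam > 0" and t: "t > 0"
  shows "(alpha_star lam mu has_real_derivative
            (if lam * t \<le> 1 then 1 - lam else 1 - sqrt (lam / t))) (at t)"
proof -
  define f1 where "f1 = (\<lambda>x::real. mu + x * (1 - lam))"
  have f1d: "(f1 has_real_derivative (1 - lam)) (at x)" for x
    unfolding f1_def by (auto intro!: derivative_eq_intros)
  consider "lam * t < 1" | "lam * t > 1" | "lam * t = 1" by linarith
  then show ?thesis
  proof cases
    case 1
    have ev: "eventually (\<lambda>x. x \<in> {..<1/lam}) (nhds t)"
      using 1 lam by (intro eventually_nhds_in_open) (auto simp: field_simps)
    have "eventually (\<lambda>x. alpha_star lam mu x = f1 x) (nhds t)"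
      using ev by eventually_elim (use lam in \<open>auto simp: alpha_star_def f1_def field_simps\<close>)
    then have "(alpha_star lam mu has_real_derivative (1 - lam)) (at t) \<longleftrightarrow> (f1 has_real_derivative (1 - lam)) (at t)"
      by (intro DERIV_cong_ev) auto
    then show ?thesis using f1d 1 by simp
  next
    case 2
    have ev: "eventually (\<lambda>x. x \<in> {1/lam<..}) (nhds t)"
      using 2 lam by (intro eventually_nhds_in_open) (auto simp: field_simps)
    have "eventually (\<lambda>x. alpha_star lam mu x = g2 lam mu x) (nhds t)"
      using ev by eventually_elim (use lam in \<open>auto simp: alpha_star_def g2_def field_simps\<close>)
    then have "(alpha_star lam mu has_real_derivative (1 - sqrt (lam / t))) (at t) \<longleftrightarrow> (g2 lam mu has_real_derivative (1 - sqrt (lam / t))) (at t)"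
      by (intro DERIV_cong_ev) auto
    then show ?thesis using g2_deriv[OF lam t, of mu] 2 by simp
  next
    case 3
    have t0: "t = 1 / lam" using 3 lam by (simp add: field_simps)
    have sq: "sqrt (lam / t) = lam" using lam t0 by (simp add: power2_eq_square[symmetric])
    have at0: "alpha_star lam mu t = mu + t * (1 - lam)" using 3 by (simp add: alpha_star_def)
    have g2t: "g2 lam mu t = mu + t * (1 - lam)" using 3 by (simp add: g2_def algebra_simps)
    have "((\<lambda>h. (alpha_star lam mu (t + h) - alpha_star lam mu t) / h) \<longlongrightarrow> 1 - lam) (at 0)"
    proof (rule filterlim_split_at)
      have "eventually (\<lambda>h::real. h < 0) (at_left 0)"
        by (simp add: eventually_at_filter)
      then have "eventually (\<lambda>h. (alpha_star lam mu (t + h) - alpha_star lam mu t) / h = 1 - lam) (at_left 0)"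
      proof eventually_elim
        case (elim h)
        have "lam * h \<le> 0" using elim lam by (simp add: mult_nonneg_nonpos)
        then have "lam * (t + h) \<le> 1" using 3 by (simp add: algebra_simps)
        then show ?case using elim at0 by (simp add: alpha_star_def field_simps)
      qed
      then show "((\<lambda>h. (alpha_star lam mu (t + h) - alpha_star lam mu t) / h) \<longlongrightarrow> 1 - lam) (at_left 0)"
        by (rule tendsto_eq_rhs[OF tendsto_cong[THEN iffD2]]) auto
    next
      have g: "((\<lambda>h. (g2 lam mu (t + h) - g2 lam mu t) / h) \<longlongrightarrow> 1 - lam) (at 0)"
        using g2_deriv[OF lam t, of mu] sq by (simp add: DERIV_def)
      have "eventually (\<lambda>h::real. h > 0) (at_right 0)"
        by (simp add: eventually_at_filter)
      then have ev: "eventually (\<lambda>h. (alpha_star lam mu (t + h) - alpha_star lam mu t) / h =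
                   (g2 lam mu (t + h) - g2 lam mu t) / h) (at_right 0)"
      proof eventually_elim
        case (elim h)
        have "lam * h > 0" using elim lam by simp
        then have "lam * (t + h) > 1" using 3 by (simp add: algebra_simps)
        then show ?case using at0 g2t by (simp add: alpha_star_def g2_def)
      qed
      have gr: "((\<lambda>h. (g2 lam mu (t + h) - g2 lam mu t) / h) \<longlongrightarrow> 1 - lam) (at_right 0)"
        using g by (simp add: filterlim_at_split)
      show "((\<lambda>h. (alpha_star lam mu (t + h) - alpha_star lam mu t) / h) \<longlongrightarrow> 1 - lam) (at_right 0)"
        using gr by (subst tendsto_cong[OF ev])
    qed
    then show ?thesis using 3 by (simp add: DERIV_def)
  qed
qed

theorem proposition3:
  fixes lam mu :: real
  assumes "lam > 0" and "mu > 0" and "lam < mu + 1"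
  shows
    \<comment> \<open>alpha*(theta) is the (unique) maximizer of Pi(.;theta) over alpha > 0, and the max over d is attained\<close>
    "(\<forall>\<theta>>0. \<forall>\<alpha>>0. \<exists>d\<ge>0. Pi_val lam mu \<theta> \<alpha> = profit lam mu \<theta> \<alpha> d \<and>
                       (\<forall>d'\<ge>0. profit lam mu \<theta> \<alpha> d' \<le> profit lam mu \<theta> \<alpha> d))
     \<and> (\<forall>\<theta>>0. alpha_star lam mu \<theta> > 0 \<and>
          (\<forall>\<alpha>>0. \<alpha> \<noteq> alpha_star lam mu \<theta> \<longrightarrow>
              Pi_val lam mu \<theta> \<alpha> < Pi_val lam mu \<theta> (alpha_star lam mu \<theta>)))
     \<and> (\<forall>\<theta>>0. (alpha_star lam mu has_real_derivative
            (if lam * \<theta> \<le> 1 then 1 - lam else 1 - sqrt (lam / \<theta>))) (at \<theta>))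
     \<and> (lam > 1 \<longrightarrow>
          strict_antimono_on {0<..<lam} (alpha_star lam mu)
        \<and> strict_mono_on {lam<..} (alpha_star lam mu)
        \<and> alpha_star lam mu lam = mu + 1 - lam
        \<and> (\<forall>\<theta>>0. alpha_star lam mu lam \<le> alpha_star lam mu \<theta>))
     \<and> (lam \<le> 1 \<longrightarrow> (\<forall>\<theta>>0. deriv (alpha_star lam mu) \<theta> \<ge> 0))"
proof -
  note lam = assms(1) and mu = assms(2) and lm = assms(3)
  have P1: "\<forall>\<theta>>0. \<forall>\<alpha>>0. \<exists>d\<ge>0. Pi_val lam mu \<theta> \<alpha> = profit lam mu \<theta> \<alpha> d \<and>
                       (\<forall>d'\<ge>0. profit lam mu \<theta> \<alpha> d' \<le> profit lam mu \<theta> \<alpha> d)"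
  proof (intro allI impI)
    fix t a :: real assume t: "t > 0" and a: "a > 0"
    show "\<exists>d\<ge>0. Pi_val lam mu t a = profit lam mu t a d \<and>
                       (\<forall>d'\<ge>0. profit lam mu t a d' \<le> profit lam mu t a d)"
      using inner_max[OF lam t a] Pi_formula[OF lam t a] by auto
  qed
  have P2: "\<forall>\<theta>>0. alpha_star lam mu \<theta> > 0 \<and>
          (\<forall>\<alpha>>0. \<alpha> \<noteq> alpha_star lam mu \<theta> \<longrightarrow>
              Pi_val lam mu \<theta> \<alpha> < Pi_val lam mu \<theta> (alpha_star lam mu \<theta>))"
  proof (intro allI impI conjI)
    fix t :: real assume t: "t > 0"
    define K where "K = alpha_star lam mu t"
    show K0: "alpha_star lam mu t > 0" using alpha_pos[OF lam mu lm t] .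
    fix a :: real assume a: "a > 0" "a \<noteq> alpha_star lam mu t"
    have "(a - K)^2 > 0" using a by (simp add: K_def)
    then have "K * a - a^2/2 < K * K - K^2/2" by (simp add: power2_eq_square algebra_simps)
    then show "Pi_val lam mu t a < Pi_val lam mu t (alpha_star lam mu t)"
      using Pi_formula[OF lam t a(1)] Pi_formula[OF lam t K0] by (simp add: K_def)
  qed
  have P3: "\<forall>\<theta>>0. (alpha_star lam mu has_real_derivative
            (if lam * \<theta> \<le> 1 then 1 - lam else 1 - sqrt (lam / \<theta>))) (at \<theta>)"
    using alpha_deriv[OF lam] by blast
  have P4: "lam > 1 \<longrightarrow>
          strict_antimono_on {0<..<lam} (alpha_star lam mu)
        \<and> strict_mono_on {lam<..} (alpha_star lam mu)
        \<and> alpha_star lam mu lam = mu + 1 - lam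
        \<and> (\<forall>\<theta>>0. alpha_star lam mu lam \<le> alpha_star lam mu \<theta>)"
  proof (intro impI conjI)
    assume l1: "lam > 1"
    show "strict_antimono_on {0<..<lam} (alpha_star lam mu)"
    proof (rule monotone_onI)
      fix x y assume xy: "x \<in> {0<..<lam}" "y \<in> {0<..<lam}" "x < y"
      show "alpha_star lam mu y < alpha_star lam mu x"
      proof (rule DERIV_neg_imp_decreasing[OF xy(3)])
        fix z assume z: "x \<le> z" "z \<le> y"
        have z0: "z > 0" "z < lam" using z xy by auto
        have "(if lam * z \<le> 1 then 1 - lam else 1 - sqrt (lam / z)) < 0"
        proof (cases "lam * z \<le> 1")
          case False
          have "lam / z > 1" using z0 by simp
          then have "sqrt (lam / z) > 1" by simp
          then show ?thesis using False by simp
        qed (use l1 in simp)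
        then show "\<exists>y. DERIV (alpha_star lam mu) z :> y \<and> y < 0"
          using alpha_deriv[OF lam z0(1)] by blast
      qed
    qed
    show "strict_mono_on {lam<..} (alpha_star lam mu)"
    proof (rule monotone_onI)
      fix x y assume xy: "x \<in> {lam<..}" "y \<in> {lam<..}" "x < y"
      show "alpha_star lam mu x < alpha_star lam mu y"
      proof (rule DERIV_pos_imp_increasing[OF xy(3)])
        fix z assume z: "x \<le> z" "z \<le> y"
        have z0: "z > 0" "z > lam" using z xy lam by auto
        have "lam * z > 1 * 1" using z0 l1 by (intro mult_strict_mono) auto
        moreover have "lam / z < 1" using z0 by simp
        then have "sqrt (lam / z) < 1" by simp
        ultimately have "(if lam * z \<le> 1 then 1 - lam else 1 - sqrt (lam / z)) > 0" by simp
        then show "\<exists>y. DERIV (alpha_star lam mu) z :> y \<and> y > 0"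
          using alpha_deriv[OF lam z0(1)] by blast
      qed
    qed
    have ll: "lam * lam > 1" using l1 by (metis less_1_mult)
    show al: "alpha_star lam mu lam = mu + 1 - lam"
      using ll lam by (simp add: alpha_star_def)
    show "\<forall>\<theta>>0. alpha_star lam mu lam \<le> alpha_star lam mu \<theta>"
    proof (intro allI impI)
      fix t :: real assume t: "t > 0"
      show "alpha_star lam mu lam \<le> alpha_star lam mu t"
      proof (cases "lam * t \<le> 1")
        case True
        have "t < lam * t" using l1 t by simp
        then have "t < 1" using True by linarith
        then have "(1 - t) * (lam - 1) \<ge> 0" using l1 by simp
        then show ?thesis using True al by (simp add: alpha_star_def algebra_simps)
      next
        case False
        have sq: "(sqrt t - sqrt lam)^2 \<ge> 0" by simp
        have "lam * t > 1" using False by simp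
        from alpha_sq[OF lam t this, of mu] sq al show ?thesis by linarith
      qed
    qed
  qed
  have P5: "lam \<le> 1 \<longrightarrow> (\<forall>\<theta>>0. deriv (alpha_star lam mu) \<theta> \<ge> 0)"
  proof (intro impI allI)
    fix t :: real assume l1: "lam \<le> 1" and t: "t > 0"
    have "(if lam * t \<le> 1 then 1 - lam else 1 - sqrt (lam / t)) \<ge> 0"
    proof (cases "lam * t \<le> 1")
      case False
      have "lam * t \<le> t" using l1 lam t by (intro mult_left_le_one_le) auto
      then have "t > 1" using False by linarith
      then have "lam / t \<le> 1" using l1 t by simp
      then have "sqrt (lam / t) \<le> 1" by simp
      then show ?thesis using False by simp
    qed (use l1 in simp)
    then show "deriv (alpha_star lam mu) t \<ge> 0"
      using DERIV_imp_deriv[OF alpha_deriv[OF lam t]] by simp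
  qed
  show ?thesis by (intro conjI P1 P2 P3 P4 P5)
qed

end
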